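(* For any $\epsilon\in(0,1)$, with probability at least $1-\delta$ over the i.i.d. sample $x_1,x_2,\dots\sim D_X$, \[V_{P,\pi,t}\le(1+\epsilon)\,\widehat V_{P,\pi,t}+\frac{7500}{\epsilon^3}K\] for all distributions $P$ over $\Pi$, all $\pi\in\Pi$, and all $t\ge 16K\log(8KN/\delta)$.
   Context: $A$ is a set of $K$ actions, $X$ a set of contexts, $\Pi$ a finite set of $N$ policies $\pi:X\to A$, $D_X$ a distribution on $X$, and $\delta\in(0,1)$. For a distribution $P$ over $\Pi$, $W_P(x,a)=\sum_{\pi:\pi(x)=a}P(\pi)$. Let $C_t=2\log(Nt/\delta)$ and $\mu_t=\min\{\frac1{2K},\sqrt{C_t/(2Kt)}\}$. For a distribution $P$ over $\Pi$, $\pi\in\Pi$ and $t\ge 2$, define $V_{P,\pi,t}=\mathbb{E}_{x\sim D_X}\bigl[1/((1-K\mu_t)W_P(x,\pi(x))+\mu_t)\bigr]$ and $\widehat V_{P,\pi,t}=\frac1{t-1}\sum_{i=1}^{t-1}1/((1-K\mu_t)W_P(x_i,\pi(x_i))+\mu_t)$. *)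

theory Defs
  imports "HOL-Probability.Probability"
begin

definition is_dist :: "('x \<Rightarrow> 'a) set \<Rightarrow> (('x \<Rightarrow> 'a) \<Rightarrow> real) \<Rightarrow> bool" where
  "is_dist Pol P \<longleftrightarrow> (\<forall>\<pi>\<in>Pol. 0 \<le> P \<pi>) \<and> (\<Sum>\<pi>\<in>Pol. P \<pi>) = 1"

definition W :: "('x \<Rightarrow> 'a) set \<Rightarrow> (('x \<Rightarrow> 'a) \<Rightarrow> real) \<Rightarrow> 'x \<Rightarrow> 'a \<Rightarrow> real" where
  "W Pol P x a = (\<Sum>\<pi>\<in>{\<pi>\<in>Pol. \<pi> x = a}. P \<pi>)"

definition C_t :: "nat \<Rightarrow> real \<Rightarrow> nat \<Rightarrow> real" where
  "C_t N \<delta> t = 2 * ln (real N * real t / \<delta>)"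

definition mu_t :: "nat \<Rightarrow> nat \<Rightarrow> real \<Rightarrow> nat \<Rightarrow> real" where
  "mu_t K N \<delta> t = min (1 / (2 * real K)) (sqrt (C_t N \<delta> t / (2 * real K * real t)))"

definition V :: "'x measure \<Rightarrow> ('x \<Rightarrow> 'a) set \<Rightarrow> nat \<Rightarrow> real \<Rightarrow>
    (('x \<Rightarrow> 'a) \<Rightarrow> real) \<Rightarrow> ('x \<Rightarrow> 'a) \<Rightarrow> nat \<Rightarrow> real" where
  "V D Pol K \<delta> P \<pi> t =
     (let \<mu> = mu_t K (card Pol) \<delta> t in
      \<integral>x. 1 / ((1 - real K * \<mu>) * W Pol P x (\<pi> x) + \<mu>) \<partial>D)"

definition V_hat :: "(nat \<Rightarrow> 'x) \<Rightarrow> ('x \<Rightarrow> 'a) set \<Rightarrow> nat \<Rightarrow> real \<Rightarrow>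
    (('x \<Rightarrow> 'a) \<Rightarrow> real) \<Rightarrow> ('x \<Rightarrow> 'a) \<Rightarrow> nat \<Rightarrow> real" where
  "V_hat xs Pol K \<delta> P \<pi> t =
     (let \<mu> = mu_t K (card Pol) \<delta> t in
      (1 / (real t - 1)) * (\<Sum>i=1..t-1. 1 / ((1 - real K * \<mu>) * W Pol P (xs i) (\<pi> (xs i)) + \<mu>)))"

end

theory Submission
  imports Defs
begin

fun ExL :: "('b \<Rightarrow> real) \<Rightarrow> 'b set \<Rightarrow> nat \<Rightarrow> ('b list \<Rightarrow> real) \<Rightarrow> real" where
  "ExL p S 0 \<phi> = \<phi> []"
| "ExL p S (Suc m) \<phi> = (\<Sum>j\<in>S. p j * ExL p S m (\<lambda>ys. \<phi> (j # ys)))"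

lemma ExL_add: "ExL p S m (\<lambda>ys. \<phi> ys + \<psi> ys) = ExL p S m \<phi> + ExL p S m \<psi>"
  by (induction m arbitrary: \<phi> \<psi>) (simp_all add: distrib_left sum.distrib)

lemma ExL_scale: "ExL p S m (\<lambda>ys. c * \<phi> ys) = c * ExL p S m \<phi>"
  by (induction m arbitrary: \<phi>) (simp_all add: sum_distrib_left algebra_simps)

lemma ExL_diff: "ExL p S m (\<lambda>ys. \<phi> ys - \<psi> ys) = ExL p S m \<phi> - ExL p S m \<psi>"
  using ExL_add[of p S m \<phi> "\<lambda>ys. - \<psi> ys"] ExL_scale[of p S m "-1" \<psi>] by simp

lemma ExL_zero: "ExL p S m (\<lambda>_. 0) = 0"
  by (induction m) simp_all

lemma ExL_sum: "finite I \<Longrightarrow> ExL p S m (\<lambda>ys. \<Sum>i\<in>I. \<phi> i ys) = (\<Sum>i\<in>I. ExL p S m (\<phi> i))"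
  by (induction I rule: finite_induct) (simp_all add: ExL_add ExL_zero)

lemma ExL_const:
  assumes "(\<Sum>j\<in>S. p j) = 1"
  shows "ExL p S m (\<lambda>_. c) = c"
  using assms by (induction m) (simp_all flip: sum_distrib_right)

lemma ExL_mono:
  assumes "\<And>j. j \<in> S \<Longrightarrow> 0 \<le> p j"
    and "\<And>ys. set ys \<subseteq> S \<Longrightarrow> length ys = m \<Longrightarrow> \<phi> ys \<le> \<psi> ys"
  shows "ExL p S m \<phi> \<le> ExL p S m \<psi>"
  using assms(2)
proof (induction m arbitrary: \<phi> \<psi>)
  case 0 then show ?case by simp
next
  case (Suc m)
  show ?case unfolding ExL.simps
  proof (rule sum_mono, rule mult_left_mono)
    fix j assume j: "j \<in> S"
    show "ExL p S m (\<lambda>ys. \<phi> (j # ys)) \<le> ExL p S m (\<lambda>ys. \<psi> (j # ys))"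
      by (rule Suc.IH) (use Suc.prems j in auto)
    show "0 \<le> p j" using assms(1) j .
  qed
qed

lemma ExL_integral:
  assumes "\<And>ys. integrable M (\<phi> ys)"
  shows "(\<integral>x. ExL p S m (\<lambda>ys. \<phi> ys x) \<partial>M) = ExL p S m (\<lambda>ys. \<integral>x. \<phi> ys x \<partial>M)"
    and "integrable M (\<lambda>x. ExL p S m (\<lambda>ys. \<phi> ys x))"
  using assms
proof (induction m arbitrary: \<phi>)
  case 0
  { case 1 then show ?case by simp }
  { case 2 then show ?case by simp }
next
  case (Suc m)
  { case 1 
    have i: "integrable M (\<lambda>x. ExL p S m (\<lambda>ys. \<phi> (j # ys) x))" for j
      by (rule Suc.IH(2)) (use 1 in auto)
    have e: "(\<integral>x. ExL p S m (\<lambda>ys. \<phi> (j # ys) x) \<partial>M) = ExL p S m (\<lambda>ys. \<integral>x. \<phi> (j # ys) x \<partial>M)" for j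
      by (rule Suc.IH(1)) (use 1 in auto)
    have "(\<integral>x. ExL p S (Suc m) (\<lambda>ys. \<phi> ys x) \<partial>M) = (\<Sum>j\<in>S. \<integral>x. p j * ExL p S m (\<lambda>ys. \<phi> (j # ys) x) \<partial>M)"
      unfolding ExL.simps by (rule Bochner_Integration.integral_sum[where I=S and f="\<lambda>j x. p j * ExL p S m (\<lambda>ys. \<phi> (j # ys) x)"]) (use i in auto)
    also have "\<dots> = (\<Sum>j\<in>S. p j * ExL p S m (\<lambda>ys. \<integral>x. \<phi> (j # ys) x \<partial>M))"
      by (simp add: e)
    finally show ?case by simp }
  { case 2
    have i: "integrable M (\<lambda>x. ExL p S m (\<lambda>ys. \<phi> (j # ys) x))" for j
      by (rule Suc.IH(2)) (use 2 in auto)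
    show ?case unfolding ExL.simps by (rule Bochner_Integration.integrable_sum) (use i in auto) }
qed

lemma ExL_first:
  assumes "(\<Sum>j\<in>S. p j) = 1"
  shows "ExL p S m (\<lambda>ys. \<Sum>y\<leftarrow>ys. h y) = real m * (\<Sum>j\<in>S. p j * h j)"
proof (induction m)
  case 0 then show ?case by simp
next
  case (Suc m)
  have "ExL p S (Suc m) (\<lambda>ys. \<Sum>y\<leftarrow>ys. h y) = (\<Sum>j\<in>S. p j * (h j + real m * (\<Sum>j\<in>S. p j * h j)))"
    by (simp add: ExL_add ExL_const[OF assms] Suc)
  also have "\<dots> = (\<Sum>j\<in>S. p j * h j) + real m * (\<Sum>j\<in>S. p j * h j)"
    by (simp add: distrib_left sum.distrib flip: sum_distrib_right) (simp add: assms)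
  finally show ?case by (simp add: algebra_simps)
qed

lemma ExL_second:
  assumes "(\<Sum>j\<in>S. p j) = 1" and "\<And>j. j \<in> S \<Longrightarrow> 0 \<le> p j"
    and "\<And>j. j \<in> S \<Longrightarrow> 0 \<le> h j \<and> h j \<le> 1"
  shows "ExL p S m (\<lambda>ys. (\<Sum>y\<leftarrow>ys. h y)^2) \<le> real m * (\<Sum>j\<in>S. p j * h j) + (real m)^2 * (\<Sum>j\<in>S. p j * h j)^2"
proof (induction m)
  case 0 then show ?case by simp
next
  case (Suc m)
  define w where "w = (\<Sum>j\<in>S. p j * h j)"
  have w0: "0 \<le> w" unfolding w_def using assms by (auto intro!: sum_nonneg)
  have e: "ExL p S m (\<lambda>ys. (h j + (\<Sum>y\<leftarrow>ys. h y))^2) = (h j)^2 + 2 * h j * (real m * w) + ExL p S m (\<lambda>ys. (\<Sum>y\<leftarrow>ys. h y)^2)" for j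
  proof -
    have "(\<lambda>ys. (h j + (\<Sum>y\<leftarrow>ys. h y))^2) = (\<lambda>ys. ((h j)^2 + (2 * h j) * (\<Sum>y\<leftarrow>ys. h y)) + (\<Sum>y\<leftarrow>ys. h y)^2)"
      by (simp add: power2_eq_square algebra_simps)
    then show ?thesis
      by (simp only: ExL_add ExL_scale ExL_const[OF assms(1)] ExL_first[OF assms(1)] w_def)
  qed
  have "ExL p S (Suc m) (\<lambda>ys. (\<Sum>y\<leftarrow>ys. h y)^2) = (\<Sum>j\<in>S. p j * ((h j)^2 + 2 * h j * (real m * w) + ExL p S m (\<lambda>ys. (\<Sum>y\<leftarrow>ys. h y)^2)))"
    by (simp add: e)
  also have "\<dots> \<le> (\<Sum>j\<in>S. p j * (h j + 2 * h j * (real m * w) + (real m * w + (real m)^2 * w^2)))"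
  proof (rule sum_mono, rule mult_left_mono)
    fix j assume j: "j \<in> S"
    have "(h j)^2 \<le> h j" using assms(3)[OF j] mult_left_le[of "h j" "h j"] by (simp add: power2_eq_square)
    then show "(h j)^2 + 2 * h j * (real m * w) + ExL p S m (\<lambda>ys. (\<Sum>y\<leftarrow>ys. h y)^2) \<le> h j + 2 * h j * (real m * w) + (real m * w + (real m)^2 * w^2)"
      using Suc unfolding w_def by linarith
    show "0 \<le> p j" using assms(2) j .
  qed
  also have "\<dots> = w + 2 * w * (real m * w) + (real m * w + (real m)^2 * w^2)"
  proof -
    have "(\<Sum>j\<in>S. p j * (h j + 2 * h j * (real m * w) + (real m * w + (real m)^2 * w^2)))
        = (\<Sum>j\<in>S. (p j * h j) * (1 + 2 * (real m * w)) + p j * (real m * w + (real m)^2 * w^2))"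
      by (rule sum.cong) (simp_all add: algebra_simps)
    also have "\<dots> = w * (1 + 2 * (real m * w)) + 1 * (real m * w + (real m)^2 * w^2)"
      by (simp only: sum.distrib w_def assms(1) flip: sum_distrib_right)
    finally show ?thesis by (simp add: algebra_simps)
  qed
  also have "\<dots> \<le> real (Suc m) * w + (real (Suc m))^2 * w^2"
    using w0 by (simp add: power2_eq_square algebra_simps)
  finally show ?case unfolding w_def .
qed

lemma recip_lower:
  fixes X M :: real assumes "X > 0" "M > 0"
  shows "1/M - (X - M)/M^2 \<le> 1/X"
proof -
  have "1/X - (1/M - (X - M)/M^2) = (X - M)^2 / (M^2 * X)"
    using assms by (simp add: field_simps power2_eq_square)
  moreover have "(X - M)^2 / (M^2 * X) \<ge> 0" using assms by simp
  ultimately show ?thesis by linarith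
qed

lemma recip_upper:
  fixes X M \<mu> :: real assumes "X \<ge> \<mu>" "\<mu> > 0" "M > 0"
  shows "1/X \<le> 1/M - (X - M)/M^2 + (X - M)^2/(M^2 * \<mu>)"
proof -
  have X: "X > 0" using assms by linarith
  have "1/X - (1/M - (X - M)/M^2) = (X - M)^2 / (M^2 * X)"
    using assms X by (simp add: field_simps power2_eq_square)
  moreover have "(X - M)^2 / (M^2 * X) \<le> (X - M)^2/(M^2 * \<mu>)"
    using assms X by (intro divide_left_mono mult_left_mono) auto
  ultimately show ?thesis by linarith
qed

definition ind :: "('x \<Rightarrow> 'a) \<Rightarrow> ('x \<Rightarrow> 'a) \<Rightarrow> 'x \<Rightarrow> real" where
  "ind \<pi>' \<pi> x = (if \<pi>' x = \<pi> x then 1 else 0)"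

definition gl :: "real \<Rightarrow> real \<Rightarrow> ('x \<Rightarrow> 'a) list \<Rightarrow> ('x \<Rightarrow> 'a) \<Rightarrow> 'x \<Rightarrow> real" where
  "gl a \<mu> ys \<pi> x = 1 / (a * ((\<Sum>y\<leftarrow>ys. ind y \<pi> x) / real (length ys)) + \<mu>)"

lemma W_eq: "finite Pol \<Longrightarrow> W Pol P x (\<pi> x) = (\<Sum>\<pi>'\<in>Pol. P \<pi>' * ind \<pi>' \<pi> x)"
  unfolding W_def ind_def by (simp add: sum.inter_filter if_distrib cong: if_cong)

lemma sum_list_ind_bounds: "0 \<le> (\<Sum>y\<leftarrow>ys. ind y \<pi> x)"
  by (induction ys) (auto simp: ind_def)

lemma W_bounds:
  assumes "finite Pol" "is_dist Pol P"
  shows "0 \<le> W Pol P x (\<pi> x)" "W Pol P x (\<pi> x) \<le> 1"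
proof -
  have "(\<Sum>\<pi>'\<in>Pol. P \<pi>' * ind \<pi>' \<pi> x) \<le> (\<Sum>\<pi>'\<in>Pol. P \<pi>')"
    using assms by (intro sum_mono) (auto simp: is_dist_def ind_def)
  then show "W Pol P x (\<pi> x) \<le> 1" using assms by (simp add: W_eq is_dist_def)
  show "0 \<le> W Pol P x (\<pi> x)" using assms by (auto simp: W_eq is_dist_def ind_def intro!: sum_nonneg)
qed

lemma approx_lower:
  assumes "finite Pol" "is_dist Pol P" "m > 0" "a > 0" "\<mu> > 0"
  shows "1 / (a * W Pol P x (\<pi> x) + \<mu>) \<le> ExL P Pol m (\<lambda>ys. gl a \<mu> ys \<pi> x)"
proof -
  define w where "w = W Pol P x (\<pi> x)"
  define M where "M = a * w + \<mu>"
  define Sm where "Sm = (\<lambda>ys. \<Sum>y\<leftarrow>ys. ind y \<pi> x)"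
  have s1: "(\<Sum>j\<in>Pol. P j) = 1" using assms by (simp add: is_dist_def)
  have w0: "0 \<le> w" using W_bounds[OF assms(1,2)] by (simp add: w_def)
  have M0: "M > 0" using w0 assms by (simp add: M_def add_nonneg_pos)
  have "ExL P Pol m (\<lambda>ys. (1/M - (\<mu> - M)/M^2) + (- a / (real m * M^2)) * Sm ys) \<le> ExL P Pol m (\<lambda>ys. gl a \<mu> ys \<pi> x)"
  proof (rule ExL_mono)
    show "0 \<le> P j" if "j \<in> Pol" for j using assms that by (auto simp: is_dist_def)
    fix ys assume ys: "set ys \<subseteq> Pol" "length ys = m"
    define X where "X = a * (Sm ys / real m) + \<mu>"
    have X0: "X > 0" using assms sum_list_ind_bounds[where ys=ys and \<pi>=\<pi> and x=x] by (simp add: X_def Sm_def add_nonneg_pos)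
    have "1/M - (X - M)/M^2 \<le> 1/X" by (rule recip_lower[OF X0 M0])
    moreover have "1/M - (X - M)/M^2 = (1/M - (\<mu> - M)/M^2) + (- a / (real m * M^2)) * Sm ys"
      using assms M0 by (simp add: X_def field_simps)
    ultimately show "(1/M - (\<mu> - M)/M^2) + (- a / (real m * M^2)) * Sm ys \<le> gl a \<mu> ys \<pi> x"
      by (simp add: gl_def X_def Sm_def ys)
  qed
  moreover have "ExL P Pol m (\<lambda>ys. (1/M - (\<mu> - M)/M^2) + (- a / (real m * M^2)) * Sm ys) = 1/M"
  proof -
    have "ExL P Pol m Sm = real m * w"
      unfolding Sm_def w_def W_eq[OF assms(1)] by (rule ExL_first[OF s1])
    then have "ExL P Pol m (\<lambda>ys. (1/M - (\<mu> - M)/M^2) + (- a / (real m * M^2)) * Sm ys) = (1/M - (\<mu> - M)/M^2) + (- a / (real m * M^2)) * (real m * w)"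
      by (simp only: ExL_add ExL_scale ExL_const[OF s1])
    also have "\<dots> = 1/M - ((\<mu> - M) + a * w)/M^2"
      using assms by (simp add: diff_divide_distrib add_divide_distrib)
    also have "\<dots> = 1/M" by (simp add: M_def)
    finally show ?thesis .
  qed
  ultimately show ?thesis by (simp add: M_def w_def)
qed

lemma approx_upper:
  assumes "finite Pol" "is_dist Pol P" "m > 0" "a > 0" "a \<le> 1" "\<mu> > 0"
  shows "ExL P Pol m (\<lambda>ys. gl a \<mu> ys \<pi> x) \<le> (1 + 1 / (real m * \<mu>)) * (1 / (a * W Pol P x (\<pi> x) + \<mu>))"
proof -
  define w where "w = W Pol P x (\<pi> x)"
  define M where "M = a * w + \<mu>"
  define Sm where "Sm = (\<lambda>ys. \<Sum>y\<leftarrow>ys. ind y \<pi> x)"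
  define b where "b = a / real m"
  define c0 where "c0 = 1/M + a * w/M^2 + a^2 * w^2/(M^2 * \<mu>)"
  define c1 where "c1 = - b/M^2 - 2 * b * a * w/(M^2 * \<mu>)"
  define c2 where "c2 = b^2/(M^2 * \<mu>)"
  have s1: "(\<Sum>j\<in>Pol. P j) = 1" using assms by (simp add: is_dist_def)
  have p0: "\<And>j. j \<in> Pol \<Longrightarrow> 0 \<le> P j" using assms by (auto simp: is_dist_def)
  have w0: "0 \<le> w" using W_bounds[OF assms(1,2)] by (simp add: w_def)
  have M0: "M > 0" using w0 assms by (simp add: M_def add_nonneg_pos)
  have b0: "b > 0" using assms by (simp add: b_def)
  have "ExL P Pol m (\<lambda>ys. gl a \<mu> ys \<pi> x) \<le> ExL P Pol m (\<lambda>ys. c0 + c1 * Sm ys + c2 * (Sm ys)^2)"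
  proof (rule ExL_mono)
    show "0 \<le> P j" if "j \<in> Pol" for j using p0 that .
    fix ys assume ys: "set ys \<subseteq> Pol" "length ys = m"
    define X where "X = a * (Sm ys / real m) + \<mu>"
    have "X \<ge> \<mu>" using assms sum_list_ind_bounds[where ys=ys and \<pi>=\<pi> and x=x] by (simp add: X_def Sm_def)
    then have "1/X \<le> 1/M - (X - M)/M^2 + (X - M)^2/(M^2 * \<mu>)"
      by (rule recip_upper[OF _ assms(6) M0])
    moreover have "X - M = b * Sm ys - a * w" by (simp add: X_def M_def b_def)
    moreover have "1/M - (b * Sm ys - a * w)/M^2 + (b * Sm ys - a * w)^2/(M^2 * \<mu>) = c0 + c1 * Sm ys + c2 * (Sm ys)^2"
      using M0 assms unfolding c0_def c1_def c2_def by (simp add: power2_eq_square field_simps)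
    ultimately show "gl a \<mu> ys \<pi> x \<le> c0 + c1 * Sm ys + c2 * (Sm ys)^2"
      by (simp add: gl_def X_def Sm_def ys)
  qed
  also have "ExL P Pol m (\<lambda>ys. c0 + c1 * Sm ys + c2 * (Sm ys)^2) = c0 + c1 * (real m * w) + c2 * ExL P Pol m (\<lambda>ys. (Sm ys)^2)"
  proof -
    have "ExL P Pol m Sm = real m * w"
      unfolding Sm_def w_def W_eq[OF assms(1)] by (rule ExL_first[OF s1])
    then show ?thesis by (simp only: ExL_add ExL_scale ExL_const[OF s1])
  qed
  also have "\<dots> \<le> c0 + c1 * (real m * w) + c2 * (real m * w + (real m)^2 * w^2)"
  proof -
    have "ExL P Pol m (\<lambda>ys. (Sm ys)^2) \<le> real m * w + (real m)^2 * w^2"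
      unfolding Sm_def w_def W_eq[OF assms(1)]
      by (rule ExL_second[OF s1 p0]) (auto simp: ind_def)
    moreover have "c2 \<ge> 0" using M0 assms by (simp add: c2_def)
    ultimately show ?thesis by (simp add: mult_left_mono)
  qed
  also have "\<dots> = 1/M + a^2 * w / (real m * M^2 * \<mu>)"
    using assms M0 unfolding c0_def c1_def c2_def b_def by (simp add: field_simps power2_eq_square)
  also have "\<dots> \<le> 1/M + M / (real m * M^2 * \<mu>)"
  proof -
    have "a^2 * w \<le> a * w" using assms w0 mult_left_le_one_le[of w a] by (simp add: power2_eq_square mult_left_mono)
    also have "\<dots> \<le> M" using assms by (simp add: M_def)
    finally show ?thesis using assms M0 by (simp add: divide_right_mono)
  qed
  also have "\<dots> = (1 + 1 / (real m * \<mu>)) * (1 / M)"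
    using assms M0 by (simp add: field_simps power2_eq_square)
  finally show ?thesis by (simp add: M_def w_def)
qed


lemma exp_convex_bound:
  fixes l g :: real assumes "0 \<le> l" "0 \<le> g" "g \<le> 1"
  shows "exp (- l * g) \<le> 1 - (1 - exp (- l)) * g"
proof -
  have "exp (l * ((1 - g) *\<^sub>R 0 + g *\<^sub>R (-1))) \<le> (1 - g) * exp (l * 0) + g * exp (l * (-1))"
    by (rule convex_onD[OF convex_on_exp[OF assms(1)]]) (use assms in auto)
  then show ?thesis by (simp add: algebra_simps)
qed

lemma conc:
  fixes D :: "'x measure" and g :: "'x \<Rightarrow> real"
  assumes Dps: "prob_space D" and gm[measurable]: "g \<in> borel_measurable D"
    and g0: "\<And>x. 0 \<le> g x" and g1: "\<And>x. g x \<le> 1"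
    and l: "0 < l" and n: "0 < n"
  shows "measure (PiM UNIV (\<lambda>_::nat. D)) {xs \<in> space (PiM UNIV (\<lambda>_::nat. D)).
            (\<integral>x. g x \<partial>D) > (1+l) * ((\<Sum>i\<in>{1..n}. g (xs i)) / real n) + \<eta>}
         \<le> exp (-(l * real n * \<eta> / (1+l)))"
proof -
  interpret D: prob_space D by (rule Dps)
  interpret pps: product_prob_space "\<lambda>_::nat. D" UNIV
    by (rule product_prob_spaceI) (rule Dps)
  define PP where "PP = PiM UNIV (\<lambda>_::nat. D)"
  define I where "I = {1..n}"
  define p where "p = (\<integral>x. g x \<partial>D)"
  define S where "S = (\<lambda>xs. \<Sum>i\<in>I. g (xs i))"
  define a where "a = - (real n * (p - \<eta>) / (1 + l))"
  define c where "c = 1 - exp (- l)"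
  have finI: "finite I" by (simp add: I_def)
  have cardI: "card I = n" by (simp add: I_def)
  have Sm[measurable]: "S \<in> borel_measurable PP"
    unfolding S_def PP_def by measurable
  have intg: "integrable D g" using g0 g1 by (intro D.integrable_const_bound[where B=1]) auto
  have p0: "0 \<le> p" unfolding p_def using g0 by simp
  have sub: "{xs \<in> space PP. p > (1+l) * (S xs / real n) + \<eta>} \<subseteq> {xs \<in> space PP. - S xs \<ge> a}"
  proof safe
    fix xs assume "(1 + l) * (S xs / real n) + \<eta> < p"
    then have "(1 + l) * (S xs / real n) < p - \<eta>" by simp
    then have "S xs < real n * (p - \<eta>) / (1 + l)"
      using l n by (simp add: field_simps)
    then show "a \<le> - S xs" by (simp add: a_def)
  qed
  have "emeasure PP {xs \<in> space PP. - S xs \<ge> a} \<le>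
        ennreal (exp (-l * a)) * (\<integral>\<^sup>+xs. ennreal (exp (l * (- S xs))) * indicator (space PP) xs \<partial>PP)"
    by (rule Chernoff_ineq_nn_integral_ge[where A="space PP" and f="\<lambda>xs. - S xs"]) (use l in auto)
  also have "(\<integral>\<^sup>+xs. ennreal (exp (l * (- S xs))) * indicator (space PP) xs \<partial>PP)
      = (\<integral>\<^sup>+xs. (\<Prod>i\<in>I. ennreal (exp (- l * g (restrict xs I i)))) \<partial>PP)"
    by (intro nn_integral_cong)
       (simp add: S_def exp_sum finI prod_ennreal sum_negf sum_distrib_left flip: exp_sum)
  also have "\<dots> = (\<integral>\<^sup>+y. (\<Prod>i\<in>I. ennreal (exp (- l * g (y i)))) \<partial>distr PP (PiM I (\<lambda>_. D)) (\<lambda>xs. restrict xs I))"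
  proof (rule nn_integral_distr[symmetric])
    show "(\<lambda>xs. restrict xs I) \<in> measurable PP (PiM I (\<lambda>_. D))"
      unfolding PP_def by (rule measurable_restrict_subset) simp
  qed simp
  also have "distr PP (PiM I (\<lambda>_. D)) (\<lambda>xs. restrict xs I) = PiM I (\<lambda>_. D)"
    unfolding PP_def by (rule pps.distr_PiM_restrict_finite) (simp_all add: finI)
  also have "(\<integral>\<^sup>+y. (\<Prod>i\<in>I. ennreal (exp (- l * g (y i)))) \<partial>PiM I (\<lambda>_. D))
      = (\<Prod>i\<in>I. \<integral>\<^sup>+x. ennreal (exp (- l * g x)) \<partial>D)"
    by (rule pps.product_nn_integral_prod[where f="\<lambda>_ x. ennreal (exp (- l * g x))"]) (simp_all add: finI)
  also have "(\<integral>\<^sup>+x. ennreal (exp (- l * g x)) \<partial>D) = ennreal (\<integral>x. exp (- l * g x) \<partial>D)"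
    by (rule nn_integral_eq_integral) (auto intro!: D.integrable_const_bound[where B=1] simp: l g0 less_imp_le)
  also have "(\<integral>x. exp (- l * g x) \<partial>D) \<le> exp (- c * p)"
  proof -
    have i1: "integrable D (\<lambda>x. exp (- l * g x))"
      by (intro D.integrable_const_bound[where B=1]) (auto simp: l g0 less_imp_le)
    have i2: "integrable D (\<lambda>x. 1 - c * g x)" using intg by auto
    have "(\<integral>x. exp (- l * g x) \<partial>D) \<le> (\<integral>x. 1 - c * g x \<partial>D)"
    proof (rule integral_mono[OF i1 i2])
      fix x show "exp (- l * g x) \<le> 1 - c * g x"
        using exp_convex_bound[of l "g x"] g0[of x] g1[of x] l by (simp add: c_def)
    qed
    also have "\<dots> = 1 - c * p" using intg by (simp add: p_def D.prob_space)
    also have "\<dots> \<le> exp (- c * p)" using exp_ge_add_one_self[of "- c * p"] by simp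
    finally show ?thesis .
  qed
  then have "(\<Prod>i\<in>I. ennreal (\<integral>x. exp (- l * g x) \<partial>D)) \<le> (\<Prod>i\<in>I. ennreal (exp (- c * p)))"
    by (intro prod_mono_ennreal ennreal_leI)
  then have "ennreal (exp (-l * a)) * (\<Prod>i\<in>I. ennreal (\<integral>x. exp (- l * g x) \<partial>D))
      \<le> ennreal (exp (-l * a)) * (\<Prod>i\<in>I. ennreal (exp (- c * p)))"
    by (rule mult_left_mono) auto
  also have "\<dots> = ennreal (exp (-l * a) * exp (- c * p) ^ n)"
    by (simp add: prod_ennreal cardI ennreal_mult ennreal_power)
  also have "exp (-l * a) * exp (- c * p) ^ n \<le> exp (-(l * real n * \<eta> / (1+l)))"
  proof -
    have e: "exp (-l * a) * exp (- c * p) ^ n = exp (-l * a - real n * c * p)"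
      by (simp add: exp_diff exp_of_nat_mult[symmetric] exp_minus field_simps flip: exp_add)
    have "exp l \<ge> 1 + l" by simp
    then have "exp (- l) \<le> 1 / (1 + l)" using l by (simp add: exp_minus field_simps)
    then have "c \<ge> l / (1 + l)" using l by (simp add: c_def field_simps)
    then have "real n * p * c \<ge> real n * p * (l / (1 + l))" using p0 by (intro mult_left_mono) auto
    moreover have "-l * a = l * real n * p / (1+l) - l * real n * \<eta> / (1+l)"
      using l by (simp add: a_def diff_divide_distrib right_diff_distrib)
    moreover have "real n * p * (l / (1 + l)) = l * real n * p / (1+l)" by simp
    ultimately have "-l * a - real n * c * p \<le> -(l * real n * \<eta> / (1+l))"
      by (simp add: algebra_simps)
    then show ?thesis unfolding e by simp
  qed
  finally have "emeasure PP {xs \<in> space PP. - S xs \<ge> a} \<le> ennreal (exp (-(l * real n * \<eta> / (1+l))))"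
    by (simp add: ennreal_leI)
  then have "measure PP {xs \<in> space PP. - S xs \<ge> a} \<le> exp (-(l * real n * \<eta> / (1+l)))"
    by (simp add: PP_def pps.emeasure_eq_measure)
  moreover have "measure PP {xs \<in> space PP. p > (1+l) * (S xs / real n) + \<eta>} \<le> measure PP {xs \<in> space PP. - S xs \<ge> a}"
  proof -
    have "{xs \<in> space PP. - S xs \<ge> a} \<in> sets PP" by measurable
    then show ?thesis using sub unfolding PP_def by (rule pps.finite_measure_mono[rotated])
  qed
  ultimately show ?thesis by (simp add: PP_def p_def S_def I_def)
qed


lemma ln_ge_1: "(x::real) \<ge> 3 \<Longrightarrow> ln x \<ge> 1"
proof -
  assume "x \<ge> 3"
  then have "exp 1 \<le> x" using exp_le by linarith
  then have "ln (exp 1) \<le> ln x" by (intro ln_mono) auto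
  then show ?thesis by simp
qed

lemma arith_facts:
  fixes K N t :: nat and \<delta> \<epsilon> :: real
  assumes K: "K \<ge> 1" and N: "N \<ge> 1" and d: "0 < \<delta>" "\<delta> < 1" and e: "0 < \<epsilon>" "\<epsilon> < 1"
    and t: "real t \<ge> 16 * real K * ln (8 * real K * real N / \<delta>)"
  defines "\<mu> \<equiv> mu_t K N \<delta> t"
  defines "m \<equiv> nat \<lceil>3 / (\<epsilon> * \<mu>)\<rceil>"
  defines "L \<equiv> ln (real N ^ (m+1) * (real (t+1) * real (t+2)) / \<delta>)"
  shows "t \<ge> 3" "0 < \<mu>" "real K * \<mu> \<le> 1/2" "m > 0" "1 / (real m * \<mu>) \<le> \<epsilon> / 3"
    "(1 + \<epsilon>/3) * L / (\<epsilon>/3 * real (t - 1)) / \<mu> \<le> 7500 / \<epsilon>^3 * real K"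
proof -
  define C where "C = C_t N \<delta> t"
  have lnN0: "0 \<le> ln (real N)" using N by simp
  have ln8: "ln 8 \<ge> (1::real)" using ln_ge_1[of 8] by simp
  have K1: "(1::real) \<le> real K" using K by simp
  have N1: "(1::real) \<le> real N" using N by simp
  have KN: "real N \<le> 8 * real K * real N"
    using mult_right_mono[of 1 "8 * real K" "real N"] K1 by simp
  have KN1: "1 \<le> real K * real N" using mult_mono[OF K1 N1] by simp
  have dd: "x \<le> x / \<delta>" if "0 \<le> x" for x :: real
    using that d by (simp add: le_divide_eq mult_left_le)
  have big: "ln (8 * real K * real N / \<delta>) \<ge> ln (real N / \<delta>)"
    using KN N d by (intro ln_mono divide_right_mono) auto
  have big2: "ln (real N / \<delta>) \<ge> ln (real N)"
    using N d dd[of "real N"] by (intro ln_mono) auto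
  have big3: "ln (8 * real K * real N / \<delta>) \<ge> ln 8"
    using KN1 d dd[of "8 * real K * real N"] by (intro ln_mono) auto
  have lnNd0: "0 \<le> ln (real N / \<delta>)" using big2 lnN0 by linarith
  have t16: "real t \<ge> 16"
  proof -
    have "1 \<le> real K * ln (8 * real K * real N / \<delta>)"
      using mult_mono[OF K1, of 1 "ln (8 * real K * real N / \<delta>)"] big3 ln8 by simp
    then show ?thesis using t by simp
  qed
  then show t3: "t \<ge> 3" by simp
  have KlnN: "real K * ln (real N / \<delta>) \<le> real t / 16"
    using t mult_left_mono[OF big, of "real K"] by simp
  have lnNd: "ln (real N / \<delta>) \<le> real t / 16"
    using KlnN mult_right_mono[OF K1 lnNd0] by simp
  have KlnN': "real K * ln (real N) \<le> real t / 16"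
    using KlnN mult_left_mono[OF big2, of "real K"] by simp
  have lnt: "ln (real t) \<ge> 1" using ln_ge_1[of "real t"] t16 by simp
  have lntt: "ln (real t) \<le> real t" using ln_le_minus_one[of "real t"] t16 by simp
  have Ceq: "C = 2 * ln (real N / \<delta>) + 2 * ln (real t)"
    unfolding C_def C_t_def using N d t16 by (simp add: ln_mult ln_div)
  have C2: "C \<ge> 2" using Ceq big2 lnN0 lnt by simp
  have ClnN: "C \<ge> 2 * ln (real N)" using Ceq big2 lnt by simp
  have C3t: "C \<le> 3 * real t" using Ceq lnNd lntt by simp
  have Kpos: "real K > 0" using K by simp
  have tpos: "real t > 0" using t16 by simp
  have mu_cases: "\<mu> = 1 / (2 * real K) \<or> \<mu> = sqrt (C / (2 * real K * real t))"
    unfolding \<mu>_def mu_t_def C_def by (simp add: min_def)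
  have mu_le: "\<mu> \<le> 1 / (2 * real K)" unfolding \<mu>_def mu_t_def by simp
  have mu_pos: "0 < \<mu>" unfolding \<mu>_def mu_t_def using C2 Kpos tpos by (simp add: C_def)
  then show "0 < \<mu>" .
  show "real K * \<mu> \<le> 1/2" using mu_le Kpos by (simp add: field_simps)
  have m_ge: "real m \<ge> 3 / (\<epsilon> * \<mu>)" unfolding m_def by linarith
  have m_le: "real m \<le> 3 / (\<epsilon> * \<mu>) + 1" unfolding m_def
    using mu_pos e by (simp add: of_nat_nat)
  have pos3: "3 / (\<epsilon> * \<mu>) > 0" using mu_pos e by simp
  show "m > 0" using m_ge pos3 by linarith
  show "1 / (real m * \<mu>) \<le> \<epsilon> / 3"
  proof -
    have "real m * \<mu> \<ge> 3 / \<epsilon>" using m_ge mu_pos e by (simp add: field_simps)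
    moreover have "3 / \<epsilon> > 0" using e by simp
    ultimately have "real m * \<mu> > 0" by linarith
    then have "0 < real m * \<mu> * (3 / \<epsilon>)" using \<open>3 / \<epsilon> > 0\<close> by (rule mult_pos_pos)
    with \<open>real m * \<mu> \<ge> 3 / \<epsilon>\<close> have "1 / (real m * \<mu>) \<le> 1 / (3 / \<epsilon>)"
      by (intro divide_left_mono) auto
    then show ?thesis by simp
  qed
  have F5: "ln (real N) / \<mu>^2 \<le> real K * real t"
    using mu_cases
  proof
    assume h: "\<mu> = 1 / (2 * real K)"
    have "ln (real N) / \<mu>^2 = 4 * real K * (real K * ln (real N))" using Kpos by (simp add: h power2_eq_square field_simps)
    also have "\<dots> \<le> 4 * real K * (real t / 16)" using KlnN' Kpos by (intro mult_left_mono) auto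
    also have "\<dots> \<le> real K * real t" using Kpos tpos by simp
    finally show ?thesis .
  next
    assume h: "\<mu> = sqrt (C / (2 * real K * real t))"
    have "\<mu>^2 = C / (2 * real K * real t)" using h C2 Kpos tpos by simp
    then have "ln (real N) / \<mu>^2 = real K * real t * (2 * ln (real N) / C)" using C2 Kpos tpos mu_pos by (simp add: field_simps)
    also have "\<dots> \<le> real K * real t * 1" using ClnN C2 Kpos tpos by (intro mult_left_mono) auto
    finally show ?thesis by simp
  qed
  have F6: "C / (real t * \<mu>) \<le> 6 * real K"
    using mu_cases
  proof
    assume h: "\<mu> = 1 / (2 * real K)"
    have "C / (real t * \<mu>) = 2 * real K * (C / real t)" using Kpos tpos by (simp add: h field_simps)
    also have "\<dots> \<le> 2 * real K * 3" using C3t tpos Kpos by (intro mult_left_mono) (auto simp: field_simps)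
    finally show ?thesis by simp
  next
    assume h: "\<mu> = sqrt (C / (2 * real K * real t))"
    have "\<mu>^2 = C / (2 * real K * real t)" using h C2 Kpos tpos by simp
    then have "C = 2 * real K * real t * \<mu>^2" using Kpos tpos by (simp add: field_simps)
    then have "C / (real t * \<mu>) = 2 * real K * \<mu>" using tpos mu_pos by (simp add: power2_eq_square field_simps)
    also have "\<dots> \<le> 1" using mu_le Kpos by (simp add: field_simps)
    finally show ?thesis using K1 by linarith
  qed
  have Leq: "L = real (m+1) * ln (real N) + ln (real (t+1) * real (t+2)) - ln \<delta>"
  proof -
    have A: "real N ^ (m+1) > 0" using N by simp
    have B: "real (t+1) * real (t+2) > 0" by simp
    have "L = ln (real N ^ (m+1) * (real (t+1) * real (t+2))) - ln \<delta>"
      unfolding L_def using A B d N by (subst ln_div) auto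
    also have "ln (real N ^ (m+1) * (real (t+1) * real (t+2))) = ln (real N ^ (m+1)) + ln (real (t+1) * real (t+2))"
      using A B N by (simp add: ln_mult)
    also have "ln (real N ^ (m+1)) = real (m+1) * ln (real N)" using N by (subst ln_realpow) auto
    finally show ?thesis .
  qed
  have lnt12: "ln (real (t+1) * real (t+2)) \<le> 2 + 2 * ln (real t)"
  proof -
    have "real t * 16 \<le> real t * (real t * 2)" using t16 by (intro mult_left_mono) auto
    then have h16: "real t * 16 \<le> 2 * (real t * real t)" by (simp add: algebra_simps)
    moreover have "real (t+1) * real (t+2) = real t * real t + 3 * real t + 2" by (simp add: algebra_simps)
    ultimately have "real (t+1) * real (t+2) \<le> 3 * (real t)^2" using t16 h16 unfolding power2_eq_square by linarith
    then have "ln (real (t+1) * real (t+2)) \<le> ln (3 * (real t)^2)" by (intro ln_mono) auto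
    also have "\<dots> = ln 3 + 2 * ln (real t)" using tpos by (simp add: ln_mult ln_realpow)
    also have "ln (3::real) \<le> 2" using ln_le_minus_one[of 3] by simp
    finally show ?thesis by simp
  qed
  have lnd: "- ln \<delta> \<le> 2 * ln (real N / \<delta>) - 2 * ln (real N)"
    using N d by (simp add: ln_div)
  have L_le: "L \<le> 3 / (\<epsilon> * \<mu>) * ln (real N) + 2 * C"
  proof -
    have "real (m+1) * ln (real N) \<le> (3 / (\<epsilon> * \<mu>) + 2) * ln (real N)"
      using m_le lnN0 by (intro mult_right_mono) auto
    moreover have "- ln \<delta> \<ge> 0" using d by simp
    ultimately show ?thesis using Leq lnt12 lnd Ceq C2 by (simp add: algebra_simps)
  qed
  have L0: "L \<ge> 0"
  proof -
    have "real (m+1) * ln (real N) \<ge> 0" using lnN0 by simp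
    moreover have "ln (real (t+1) * real (t+2)) \<ge> 0" using mult_mono[of 1 "real (t+1)" 1 "real (t+2)"] by simp
    moreover have "- ln \<delta> \<ge> 0" using d by simp
    ultimately show ?thesis using Leq by linarith
  qed
  have tm1: "real (t - 1) \<ge> real t / 2" using t16 by (simp add: of_nat_diff)
  have "(1 + \<epsilon>/3) * L / (\<epsilon>/3 * real (t - 1)) / \<mu> = (3 + \<epsilon>) * L / (\<epsilon> * real (t - 1) * \<mu>)"
    using e mu_pos tm1 t16 by (simp add: field_simps)
  also have "\<dots> \<le> 4 * L / (\<epsilon> * (real t / 2) * \<mu>)"
    using e mu_pos L0 tm1 t16
    by (intro frac_le mult_right_mono mult_pos_pos mult_left_mono) auto
  also have "\<dots> = 8 * L / (\<epsilon> * real t * \<mu>)" by simp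
  also have "\<dots> \<le> 8 * (3 / (\<epsilon> * \<mu>) * ln (real N) + 2 * C) / (\<epsilon> * real t * \<mu>)"
    using L_le e mu_pos tpos by (intro divide_right_mono mult_left_mono) auto
  also have "\<dots> = 24 / \<epsilon>^2 * (ln (real N) / \<mu>^2) / real t + 16 / \<epsilon> * (C / (real t * \<mu>))"
    using e mu_pos tpos by (simp add: field_simps power2_eq_square)
  also have "\<dots> \<le> 24 / \<epsilon>^2 * (real K * real t) / real t + 16 / \<epsilon> * (6 * real K)"
    using F5 F6 e tpos by (intro add_mono divide_right_mono mult_left_mono) auto
  also have "\<dots> = 24 * real K / \<epsilon>^2 + 96 * real K / \<epsilon>" using tpos by simp
  also have "\<dots> \<le> 7500 / \<epsilon>^3 * real K"
  proof -
    have "\<epsilon>^3 \<le> \<epsilon>^2" "\<epsilon>^3 \<le> \<epsilon>" using e by (simp_all add: power_decreasing power3_eq_cube power2_eq_square mult_le_one)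
    then have "24 * real K / \<epsilon>^2 \<le> 24 * real K / \<epsilon>^3" "96 * real K / \<epsilon> \<le> 96 * real K / \<epsilon>^3"
      using e Kpos by (auto intro!: divide_left_mono)
    moreover have "24 * real K / \<epsilon>^3 + 96 * real K / \<epsilon>^3 \<le> 7500 / \<epsilon>^3 * real K"
      using e Kpos by (simp add: field_simps)
    ultimately show ?thesis by linarith
  qed
  finally show "(1 + \<epsilon>/3) * L / (\<epsilon>/3 * real (t - 1)) / \<mu> \<le> 7500 / \<epsilon>^3 * real K" .
qed


lemma ExL_cong:
  assumes "\<And>ys. set ys \<subseteq> S \<Longrightarrow> length ys = m \<Longrightarrow> \<phi> ys = \<psi> ys"
  shows "ExL p S m \<phi> = ExL p S m \<psi>"
  using assms
proof (induction m arbitrary: \<phi> \<psi>)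
  case 0 then show ?case by simp
next
  case (Suc m)
  show ?case unfolding ExL.simps
  proof (rule sum.cong[OF refl])
    fix j assume j: "j \<in> S"
    have "ExL p S m (\<lambda>ys. \<phi> (j # ys)) = ExL p S m (\<lambda>ys. \<psi> (j # ys))"
      by (rule Suc.IH) (use Suc.prems j in auto)
    then show "p j * ExL p S m (\<lambda>ys. \<phi> (j # ys)) = p j * ExL p S m (\<lambda>ys. \<psi> (j # ys))" by simp
  qed
qed

lemma gl_bounds:
  assumes "0 \<le> a" "0 < \<mu>"
  shows "0 \<le> gl a \<mu> ys \<pi> x" "gl a \<mu> ys \<pi> x \<le> 1 / \<mu>"
proof -
  have "0 \<le> a * ((\<Sum>y\<leftarrow>ys. ind y \<pi> x) / real (length ys))"
    using assms sum_list_ind_bounds[where ys=ys and \<pi>=\<pi> and x=x] by simp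
  then show "0 \<le> gl a \<mu> ys \<pi> x" "gl a \<mu> ys \<pi> x \<le> 1 / \<mu>"
    using assms unfolding gl_def by (auto intro!: divide_left_mono)
qed

lemma f_bounds:
  assumes "finite Pol" "is_dist Pol P" "0 \<le> a" "0 < \<mu>"
  shows "0 \<le> 1 / (a * W Pol P x (\<pi> x) + \<mu>)" "1 / (a * W Pol P x (\<pi> x) + \<mu>) \<le> 1 / \<mu>"
proof -
  have "0 \<le> a * W Pol P x (\<pi> x)" using assms W_bounds(1)[OF assms(1,2)] by simp
  then show "0 \<le> 1 / (a * W Pol P x (\<pi> x) + \<mu>)" "1 / (a * W Pol P x (\<pi> x) + \<mu>) \<le> 1 / \<mu>"
    using assms by (auto intro!: divide_left_mono)
qed

lemma ind_meas:
  assumes "finite A" "\<forall>x. \<pi> x \<in> A" "\<pi> \<in> measurable D (count_space UNIV)" "\<pi>' \<in> measurable D (count_space UNIV)"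
  shows "ind \<pi>' \<pi> \<in> borel_measurable D"
proof -
  define S where "S = {x\<in>space D. \<pi>' x = \<pi> x}"
  have S_eq: "S = (\<Union>a\<in>A. (\<pi>' -` {a} \<inter> space D) \<inter> (\<pi> -` {a} \<inter> space D))"
    unfolding S_def using assms(2) by auto
  have "S \<in> sets D" unfolding S_eq
    using assms by (intro sets.finite_UN sets.Int measurable_sets[where A="count_space UNIV"]) auto
  then have "indicator S \<in> borel_measurable D" by (rule borel_measurable_indicator)
  moreover have "\<And>x. x \<in> space D \<Longrightarrow> indicator S x = ind \<pi>' \<pi> x"
    by (auto simp: S_def ind_def indicator_def)
  ultimately show ?thesis by (rule measurable_cong[THEN iffD1, rotated])
qed

lemma sum_list_ind_meas:
  assumes "\<And>y. y \<in> set ys \<Longrightarrow> ind y \<pi> \<in> borel_measurable D"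
  shows "(\<lambda>x. \<Sum>y\<leftarrow>ys. ind y \<pi> x) \<in> borel_measurable D"
  using assms by (induction ys) auto

lemma gl_meas:
  assumes "\<And>y. y \<in> set ys \<Longrightarrow> ind y \<pi> \<in> borel_measurable D"
  shows "(\<lambda>x. gl a \<mu> ys \<pi> x) \<in> borel_measurable D"
proof -
  have [measurable]: "(\<lambda>x. \<Sum>y\<leftarrow>ys. ind y \<pi> x) \<in> borel_measurable D"
    by (rule sum_list_ind_meas[OF assms])
  show ?thesis unfolding gl_def by measurable
qed

lemma f_meas:
  assumes "finite Pol" "\<And>y. y \<in> Pol \<Longrightarrow> ind y \<pi> \<in> borel_measurable D"
  shows "(\<lambda>x. 1 / (a * W Pol P x (\<pi> x) + \<mu>)) \<in> borel_measurable D"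
proof -
  have [measurable]: "(\<lambda>x. \<Sum>\<pi>'\<in>Pol. P \<pi>' * ind \<pi>' \<pi> x) \<in> borel_measurable D"
    using assms(2) by (intro borel_measurable_sum borel_measurable_times) auto
  show ?thesis unfolding W_eq[OF assms(1)] by measurable
qed

lemma chain:
  assumes Dps: "prob_space D" and fin: "finite Pol" and dist: "is_dist Pol P"
    and meas: "\<And>y. y \<in> Pol \<Longrightarrow> ind y \<pi> \<in> borel_measurable D"
    and m: "m > 0" and a: "0 < a" "a \<le> 1" and mu: "0 < \<mu>" and n: "n > 0" and l: "0 \<le> l"
    and good: "\<And>ys. set ys \<subseteq> Pol \<Longrightarrow> length ys = m \<Longrightarrow>
       (\<integral>x. gl a \<mu> ys \<pi> x \<partial>D) \<le> (1+l) * ((\<Sum>i\<in>{1..n}. gl a \<mu> ys \<pi> (xs i)) / real n) + e"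
  shows "(\<integral>x. 1 / (a * W Pol P x (\<pi> x) + \<mu>) \<partial>D)
     \<le> (1+l) * (1 + 1 / (real m * \<mu>)) * ((\<Sum>i\<in>{1..n}. 1 / (a * W Pol P (xs i) (\<pi> (xs i)) + \<mu>)) / real n) + e"
proof -
  interpret D: prob_space D by (rule Dps)
  define G where "G = (\<lambda>ys x. if set ys \<subseteq> Pol then gl a \<mu> ys \<pi> x else 0)"
  define f where "f = (\<lambda>x. 1 / (a * W Pol P x (\<pi> x) + \<mu>))"
  have p0: "\<And>j. j \<in> Pol \<Longrightarrow> 0 \<le> P j" using dist by (auto simp: is_dist_def)
  have Gint: "integrable D (G ys)" for ys
  proof (cases "set ys \<subseteq> Pol")
    case True
    have "(\<lambda>x. gl a \<mu> ys \<pi> x) \<in> borel_measurable D"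
      by (rule gl_meas) (use True meas in auto)
    moreover have "\<And>x. norm (gl a \<mu> ys \<pi> x) \<le> 1 / \<mu>" using gl_bounds[OF _ mu, of a ys \<pi>] a by simp
    ultimately show ?thesis using True unfolding G_def
      by (intro D.integrable_const_bound[where B="1/\<mu>"]) auto
  next
    case False then show ?thesis by (simp add: G_def)
  qed
  have fint: "integrable D f"
  proof -
    have "f \<in> borel_measurable D" unfolding f_def by (rule f_meas[OF fin meas])
    moreover have "\<And>x. norm (f x) \<le> 1 / \<mu>" using f_bounds[OF fin dist _ mu, of a] a by (simp add: f_def)
    ultimately show ?thesis by (intro D.integrable_const_bound[where B="1/\<mu>"]) auto
  qed
  have EG: "ExL P Pol m (\<lambda>ys. G ys x) = ExL P Pol m (\<lambda>ys. gl a \<mu> ys \<pi> x)" for x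
    by (rule ExL_cong) (simp add: G_def)
  have "(\<integral>x. f x \<partial>D) \<le> (\<integral>x. ExL P Pol m (\<lambda>ys. G ys x) \<partial>D)"
  proof (rule integral_mono[OF fint ExL_integral(2)[OF Gint]])
    fix x show "f x \<le> ExL P Pol m (\<lambda>ys. G ys x)"
      unfolding EG f_def by (rule approx_lower[OF fin dist m a(1) mu])
  qed
  also have "\<dots> = ExL P Pol m (\<lambda>ys. \<integral>x. G ys x \<partial>D)" by (rule ExL_integral(1)[OF Gint])
  also have "\<dots> \<le> ExL P Pol m (\<lambda>ys. ((1+l) / real n) * (\<Sum>i\<in>{1..n}. G ys (xs i)) + e)"
  proof (rule ExL_mono[OF p0])
    fix ys assume ys: "set ys \<subseteq> Pol" "length ys = m"
    show "(\<integral>x. G ys x \<partial>D) \<le> ((1+l) / real n) * (\<Sum>i\<in>{1..n}. G ys (xs i)) + e"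
      using good[OF ys] ys by (simp add: G_def)
  qed
  also have "\<dots> = ((1+l) / real n) * (\<Sum>i\<in>{1..n}. ExL P Pol m (\<lambda>ys. G ys (xs i))) + e"
  proof -
    have s1: "(\<Sum>j\<in>Pol. P j) = 1" using dist by (simp add: is_dist_def)
    show ?thesis by (simp only: ExL_add ExL_scale ExL_sum[OF finite_atLeastAtMost] ExL_const[OF s1])
  qed
  also have "\<dots> \<le> ((1+l) / real n) * (\<Sum>i\<in>{1..n}. (1 + 1 / (real m * \<mu>)) * f (xs i)) + e"
  proof -
    have "(\<Sum>i\<in>{1..n}. ExL P Pol m (\<lambda>ys. G ys (xs i))) \<le> (\<Sum>i\<in>{1..n}. (1 + 1 / (real m * \<mu>)) * f (xs i))"
      unfolding EG f_def by (intro sum_mono approx_upper[OF fin dist m a mu])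
    moreover have "0 \<le> (1+l) / real n" using l n by simp
    ultimately show ?thesis by (intro add_right_mono mult_left_mono)
  qed
  also have "\<dots> = (1+l) * (1 + 1 / (real m * \<mu>)) * ((\<Sum>i\<in>{1..n}. f (xs i)) / real n) + e"
    by (simp add: sum_distrib_left sum_divide_distrib mult.assoc)
  finally show ?thesis by (simp add: f_def)
qed


lemma telescope_sum: "(\<lambda>t::nat. \<delta> / (real (t+1) * real (t+2))) sums \<delta>"
proof -
  have "(\<lambda>n. inverse (real (Suc n))) \<longlonglongrightarrow> 0" by (rule LIMSEQ_inverse_real_of_nat)
  then have "(\<lambda>n. inverse (real (Suc n)) - inverse (real (Suc (Suc n)))) sums (inverse (real (Suc 0)) - 0)"
    by (rule telescope_sums')
  moreover have "inverse (real (Suc n)) - inverse (real (Suc (Suc n))) = 1 / (real (n+1) * real (n+2))" for n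
    by (simp add: field_simps)
  ultimately have "(\<lambda>n. 1 / (real (n+1) * real (n+2))) sums 1" by simp
  from sums_mult[OF this, of \<delta>] show ?thesis by simp
qed

theorem theorem3:
  fixes D :: "'x measure" and A :: "'a set" and Pol :: "('x \<Rightarrow> 'a) set"
    and \<delta> \<epsilon> :: real
  assumes "prob_space D"
    and "finite A" and "A \<noteq> {}"
    and "finite Pol" and "Pol \<noteq> {}"
    and "\<forall>\<pi>\<in>Pol. \<forall>x. \<pi> x \<in> A"
    and "\<forall>\<pi>\<in>Pol. \<pi> \<in> measurable D (count_space UNIV)"
    and "0 < \<delta>" and "\<delta> < 1"
    and "0 < \<epsilon>" and "\<epsilon> < 1"
  shows "\<exists>E \<in> sets (PiM UNIV (\<lambda>_::nat. D)).
           measure (PiM UNIV (\<lambda>_::nat. D)) E \<ge> 1 - \<delta> \<and>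
           (\<forall>xs\<in>E. \<forall>P. is_dist Pol P \<longrightarrow> (\<forall>\<pi>\<in>Pol. \<forall>t::nat.
              real t \<ge> 16 * real (card A) * ln (8 * real (card A) * real (card Pol) / \<delta>) \<longrightarrow>
              V D Pol (card A) \<delta> P \<pi> t
                \<le> (1 + \<epsilon>) * V_hat xs Pol (card A) \<delta> P \<pi> t + 7500 / \<epsilon>^3 * real (card A)))"
proof -
  interpret D: prob_space D by (rule assms(1))
  define PP where "PP = PiM UNIV (\<lambda>_::nat. D)"
  interpret PP: prob_space PP unfolding PP_def by (rule prob_space_PiM) (rule assms(1))
  let ?K = "card A" and ?N = "card Pol"
  have K1: "?K \<ge> 1" using assms(2,3) by (simp add: Suc_le_eq card_gt_0_iff)
  have N1: "?N \<ge> 1" using assms(4,5) by (simp add: Suc_le_eq card_gt_0_iff)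
  define lam where "lam = \<epsilon> / 3"
  define goodt where "goodt t \<longleftrightarrow> real t \<ge> 16 * real ?K * ln (8 * real ?K * real ?N / \<delta>)" for t :: nat
  define \<mu> where "\<mu> t = mu_t ?K ?N \<delta> t" for t
  define a where "a t = 1 - real ?K * \<mu> t" for t
  define m where "m t = nat \<lceil>3 / (\<epsilon> * \<mu> t)\<rceil>" for t
  define L where "L t = ln (real ?N ^ (m t + 1) * (real (t+1) * real (t+2)) / \<delta>)" for t
  define \<eta> where "\<eta> t = (1 + \<epsilon>/3) * L t / (\<epsilon>/3 * real (t - 1))" for t
  define g where "g t ys \<pi> x = \<mu> t * gl (a t) (\<mu> t) ys \<pi> x"
    for t and ys :: "('x \<Rightarrow> 'a) list" and \<pi> :: "'x \<Rightarrow> 'a" and x :: 'x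
  define Bad where "Bad t \<pi> ys = {xs \<in> space PP. (\<integral>x. g t ys \<pi> x \<partial>D) > (1+lam) * ((\<Sum>i\<in>{1..t-1}. g t ys \<pi> (xs i)) / real (t-1)) + \<eta> t}" for t \<pi> ys
  define Ls where "Ls t = {ys. set ys \<subseteq> Pol \<and> length ys = m t}" for t
  define B where "B t = (if goodt t then (\<Union>z\<in>Pol \<times> Ls t. Bad t (fst z) (snd z)) else {})" for t
  define E where "E = space PP - (\<Union>t. B t)"
  note AF = arith_facts[OF K1 N1 assms(8,9,10,11)]
  have AF1: "t \<ge> 3" "0 < \<mu> t" "real ?K * \<mu> t \<le> 1/2" "m t > 0" "1 / (real (m t) * \<mu> t) \<le> \<epsilon> / 3"
    "\<eta> t / \<mu> t \<le> 7500 / \<epsilon>^3 * real ?K" if "goodt t" for t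
    using AF[of t] that unfolding goodt_def \<mu>_def m_def L_def \<eta>_def by auto
  have a_pos: "0 < a t" "a t \<le> 1" if "goodt t" for t
    using AF1[OF that] by (auto simp: a_def)
  have indm: "ind \<pi>' \<pi> \<in> borel_measurable D" if "\<pi>' \<in> Pol" "\<pi> \<in> Pol" for \<pi>' \<pi>
    by (rule ind_meas[OF assms(2)]) (use assms(6,7) that in auto)
  have gm: "g t ys \<pi> \<in> borel_measurable D" if "set ys \<subseteq> Pol" "\<pi> \<in> Pol" for t ys \<pi>
  proof -
    have [measurable]: "(\<lambda>x. gl (a t) (\<mu> t) ys \<pi> x) \<in> borel_measurable D"
      by (rule gl_meas) (use indm that in auto)
    show ?thesis unfolding g_def[abs_def] by measurable
  qed
  have g01: "0 \<le> g t ys \<pi> x" "g t ys \<pi> x \<le> 1" if "goodt t" for t ys \<pi> x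
  proof -
    note gb = gl_bounds[of "a t" "\<mu> t" ys \<pi> x]
    have "0 \<le> a t" "0 < \<mu> t" using a_pos[OF that] AF1[OF that] by auto
    with gb show "0 \<le> g t ys \<pi> x" by (simp add: g_def)
    have "\<mu> t * gl (a t) (\<mu> t) ys \<pi> x \<le> \<mu> t * (1 / \<mu> t)"
      using gb \<open>0 \<le> a t\<close> \<open>0 < \<mu> t\<close> by (intro mult_left_mono) auto
    then show "g t ys \<pi> x \<le> 1" using \<open>0 < \<mu> t\<close> by (simp add: g_def)
  qed
  have Bad_sets: "Bad t \<pi> ys \<in> sets PP" if "set ys \<subseteq> Pol" "\<pi> \<in> Pol" for t \<pi> ys
  proof -
    have [measurable]: "g t ys \<pi> \<in> borel_measurable D" by (rule gm[OF that])
    show ?thesis unfolding Bad_def PP_def by measurable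
  qed
  have Bad_meas: "measure PP (Bad t \<pi> ys) \<le> \<delta> / (real ?N ^ (m t + 1) * (real (t+1) * real (t+2)))"
    if "goodt t" "set ys \<subseteq> Pol" "\<pi> \<in> Pol" for t \<pi> ys
  proof -
    have t3: "t \<ge> 3" using AF1[OF that(1)] by simp
    have lam0: "0 < lam" using assms(10) by (simp add: lam_def)
    have "measure PP (Bad t \<pi> ys) \<le> exp (-(lam * real (t-1) * \<eta> t / (1+lam)))"
      unfolding Bad_def PP_def
      by (rule conc[OF assms(1) gm[OF that(2,3)] g01(1)[OF that(1)] g01(2)[OF that(1)] lam0]) (use t3 in simp)
    also have "lam * real (t-1) * \<eta> t / (1+lam) = L t"
    proof -
      have nn: "real (t-1) > 0" using t3 by simp
      have gen: "x * y * ((1 + x) * z / (x * y)) / (1 + x) = z" if "x > 0" "y > 0" for x y z :: real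
      proof -
        have "x * y \<noteq> 0" "1 + x \<noteq> 0" using that by auto
        then have "x * y * ((1 + x) * z / (x * y)) = (1 + x) * z" by simp
        then show ?thesis using \<open>1 + x \<noteq> 0\<close> by simp
      qed
      show ?thesis unfolding \<eta>_def using gen[OF lam0 nn, of "L t"] by (simp add: lam_def)
    qed
    also have "exp (- L t) = \<delta> / (real ?N ^ (m t + 1) * (real (t+1) * real (t+2)))"
    proof -
      have pos: "real ?N ^ (m t + 1) * (real (t+1) * real (t+2)) / \<delta> > 0" using N1 assms(8) by simp
      have "exp (- L t) = inverse (exp (L t))" by (simp add: exp_minus)
      also have "exp (L t) = real ?N ^ (m t + 1) * (real (t+1) * real (t+2)) / \<delta>"
        unfolding L_def using pos by simp
      finally show ?thesis by simp
    qed
    finally show ?thesis .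
  qed
  have finLs: "finite (Ls t)" for t unfolding Ls_def by (rule finite_lists_length_eq[OF assms(4)])
  have cardLs: "card (Ls t) = ?N ^ m t" for t unfolding Ls_def by (rule card_lists_length_eq[OF assms(4)])
  have B_sets: "B t \<in> sets PP" for t
    unfolding B_def using Bad_sets finLs assms(4) by (auto simp: Ls_def intro!: sets.finite_UN)
  have B_meas: "measure PP (B t) \<le> \<delta> / (real (t+1) * real (t+2))" for t
  proof (cases "goodt t")
    case True
    have "measure PP (B t) \<le> (\<Sum>z\<in>Pol \<times> Ls t. measure PP (Bad t (fst z) (snd z)))"
      unfolding B_def using True Bad_sets finLs assms(4)
      by (auto intro!: measure_UNION_le simp: Ls_def)
    also have "\<dots> \<le> (\<Sum>z\<in>Pol \<times> Ls t. \<delta> / (real ?N ^ (m t + 1) * (real (t+1) * real (t+2))))"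
      by (intro sum_mono Bad_meas[OF True]) (auto simp: Ls_def)
    also have "\<dots> = real ?N * real ?N ^ m t * (\<delta> / (real ?N ^ (m t + 1) * (real (t+1) * real (t+2))))"
      by (simp add: card_cartesian_product cardLs)
    also have "\<dots> = \<delta> / (real (t+1) * real (t+2))"
    proof -
      have c: "real ?N * real ?N ^ m t = real ?N ^ (m t + 1)" by simp
      have "real ?N ^ (m t + 1) \<noteq> 0" using N1 by simp
      then show ?thesis unfolding c by simp
    qed
    finally show ?thesis .
  next
    case False then show ?thesis using assms(8) by (simp add: B_def)
  qed
  have sumB: "measure PP (\<Union>t. B t) \<le> \<delta>"
  proof -
    have sm: "summable (\<lambda>t. measure PP (B t))"
      by (rule summable_comparison_test[OF _ sums_summable[OF telescope_sum[of \<delta>]]])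
         (use B_meas in auto)
    have "measure PP (\<Union>t. B t) \<le> (\<Sum>t. measure PP (B t))"
      by (rule PP.finite_measure_subadditive_countably) (use B_sets sm in auto)
    also have "\<dots> \<le> (\<Sum>t. \<delta> / (real (t+1) * real (t+2)))"
      by (rule suminf_le[OF B_meas sm sums_summable[OF telescope_sum[of \<delta>]]])
    also have "\<dots> = \<delta>" using telescope_sum[of \<delta>] by (simp add: sums_iff)
    finally show ?thesis .
  qed
  have UB: "(\<Union>t. B t) \<in> sets PP" using B_sets by auto
  have E_sets: "E \<in> sets PP" unfolding E_def using UB by auto
  have E_meas: "measure PP E \<ge> 1 - \<delta>"
    unfolding E_def using PP.prob_compl[OF UB] sumB by simp
  have main: "V D Pol ?K \<delta> P \<pi> t \<le> (1 + \<epsilon>) * V_hat xs Pol ?K \<delta> P \<pi> t + 7500 / \<epsilon>^3 * real ?K"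
    if xs: "xs \<in> E" and dist: "is_dist Pol P" and pi: "\<pi> \<in> Pol" and tg: "goodt t" for xs P \<pi> t
  proof -
    note af = AF1[OF tg]
    have t3: "t \<ge> 3" and mu0: "0 < \<mu> t" using af by auto
    have n0: "t - 1 > 0" using t3 by simp
    have xsB: "xs \<notin> B t" and xsS: "xs \<in> space PP" using xs unfolding E_def by auto
    have good: "(\<integral>x. gl (a t) (\<mu> t) ys \<pi> x \<partial>D) \<le> (1+lam) * ((\<Sum>i\<in>{1..t-1}. gl (a t) (\<mu> t) ys \<pi> (xs i)) / real (t-1)) + \<eta> t / \<mu> t"
      if ys: "set ys \<subseteq> Pol" "length ys = m t" for ys
    proof -
      have "xs \<notin> Bad t \<pi> ys" using xsB tg pi ys by (auto simp: B_def Ls_def)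
      then have "\<not> ((\<integral>x. g t ys \<pi> x \<partial>D) > (1+lam) * ((\<Sum>i\<in>{1..t-1}. g t ys \<pi> (xs i)) / real (t-1)) + \<eta> t)"
        using xsS by (simp add: Bad_def)
      then have "\<mu> t * (\<integral>x. gl (a t) (\<mu> t) ys \<pi> x \<partial>D) \<le> \<mu> t * ((1+lam) * ((\<Sum>i\<in>{1..t-1}. gl (a t) (\<mu> t) ys \<pi> (xs i)) / real (t-1))) + \<eta> t"
        by (simp add: g_def sum_distrib_left[symmetric] algebra_simps)
      then show ?thesis using mu0 by (simp add: field_simps)
    qed
    have ch: "(\<integral>x. 1 / (a t * W Pol P x (\<pi> x) + \<mu> t) \<partial>D)
       \<le> (1+lam) * (1 + 1 / (real (m t) * \<mu> t)) * ((\<Sum>i\<in>{1..t-1}. 1 / (a t * W Pol P (xs i) (\<pi> (xs i)) + \<mu> t)) / real (t-1)) + \<eta> t / \<mu> t"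
      by (rule chain[OF assms(1,4) dist indm[OF _ pi] af(4) a_pos[OF tg] mu0 n0 _ good])
         (use assms(10) in \<open>auto simp: lam_def\<close>)
    have V_eq: "V D Pol ?K \<delta> P \<pi> t = (\<integral>x. 1 / (a t * W Pol P x (\<pi> x) + \<mu> t) \<partial>D)"
      by (simp add: V_def a_def \<mu>_def Let_def)
    define Vh where "Vh = (\<Sum>i\<in>{1..t-1}. 1 / (a t * W Pol P (xs i) (\<pi> (xs i)) + \<mu> t)) / real (t-1)"
    have Vh_eq: "V_hat xs Pol ?K \<delta> P \<pi> t = Vh"
      using t3 by (simp add: V_hat_def a_def \<mu>_def Let_def Vh_def of_nat_diff)
    have fi0: "0 \<le> 1 / (a t * W Pol P (xs i) (\<pi> (xs i)) + \<mu> t)" for i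
    proof -
      have "0 \<le> a t" using a_pos[OF tg] by simp
      then show ?thesis by (rule f_bounds(1)[OF assms(4) dist _ mu0])
    qed
    have Vh0: "0 \<le> Vh" unfolding Vh_def
      by (intro divide_nonneg_nonneg sum_nonneg fi0) simp
    have fac: "(1+lam) * (1 + 1 / (real (m t) * \<mu> t)) \<le> 1 + \<epsilon>"
    proof -
      have "(1+lam) * (1 + 1 / (real (m t) * \<mu> t)) \<le> (1 + \<epsilon>/3) * (1 + \<epsilon>/3)"
      proof (rule mult_mono)
        have "0 < real (m t) * \<mu> t" using af(2,4) by simp
        then show "0 \<le> 1 + 1 / (real (m t) * \<mu> t)" by (simp add: add_nonneg_nonneg)
        show "1 + 1 / (real (m t) * \<mu> t) \<le> 1 + \<epsilon> / 3" using af(5) by simp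
      qed (use assms(10) in \<open>auto simp: lam_def\<close>)
      also have "\<dots> \<le> 1 + \<epsilon>"
      proof -
        have "\<epsilon> * \<epsilon> \<le> \<epsilon>" using assms(10,11) mult_left_le[of \<epsilon> \<epsilon>] by simp
        moreover have "(1 + \<epsilon>/3) * (1 + \<epsilon>/3) = 1 + 2/3 * \<epsilon> + 1/9 * (\<epsilon> * \<epsilon>)"
          by (simp add: algebra_simps)
        moreover have "1 + 2/3 * \<epsilon> + 1/9 * y \<le> 1 + \<epsilon>" if "y \<le> \<epsilon>" for y
          using that assms(10) by linarith
        ultimately show ?thesis by metis
      qed
      finally show ?thesis .
    qed
    have "V D Pol ?K \<delta> P \<pi> t \<le> (1+lam) * (1 + 1 / (real (m t) * \<mu> t)) * Vh + \<eta> t / \<mu> t"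
      using ch V_eq by (simp add: Vh_def)
    also have "\<dots> \<le> (1 + \<epsilon>) * Vh + 7500 / \<epsilon>^3 * real ?K"
      using fac Vh0 af(6) by (intro add_mono mult_right_mono) auto
    finally show ?thesis using Vh_eq by simp
  qed
  show ?thesis
    using E_sets E_meas main unfolding PP_def goodt_def by blast
qed

end
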